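(* Let $M$ be a commutative and cocommutative Hopf algebra over $\mathbb{C}$ and $A$ a commutative $\mathbb{C}$-algebra. Let $r$ be an $A$-valued bicharacter on $M$ with symmetrization $s=r\circ r^t$, and let $s_1$ be any symmetric $A$-valued bicharacter on $M$. Put $s_2=s\circ s_1$. Then for all $a,b\in M$, \[ \mathrm{EQ}_{r}(a\bullet_{s_1}b)=\mathrm{EQ}_{r}(a)\bullet_{s_2}\mathrm{EQ}_{r}(b). \]
   Context: For a Hopf algebra $M$ with coproduct $\Delta$ and counit $\eta$, Sweedler notation: $\Delta(a)=\sum a'\otimes a''$, $\Delta^2(a)=\sum a'\otimes a''\otimes a'''$. An $A$-valued bicharacter on $M$ is a linear map $r:M\otimes M\to A$ with $r(1\otimes a)=\eta(a)=r(a\otimes 1)$, $r(ab\otimes c)=\sum r(a\otimes c')r(b\otimes c'')$, $r(a\otimes bc)=\sum r(a'\otimes b)r(a''\otimes c)$ for all $a,b,c\in M$. Convolution: $(r\circ t)(a\otimes b)=\sum r(a'\otimes b')t(a''\otimes b'')$; $r^t(a\otimes b)=r(b\otimes a)$; $t$ is symmetric if $t=t^t$; the symmetrization of $r$ is $r\circ r^t$. $M_A=M\otimes_{\mathbb{C}}A$. For a symmetric bicharacter $t$, $\bullet_t$ is the $A$-bilinear product on $M_A$ extending $a\bullet_t b=\sum a'b'\,t(a''\otimes b'')$. $\mathrm{EQ}_r:M\to M_A$, $\mathrm{EQ}_r(m)=\sum r(m'\otimes m'')m'''$, extended $A$-linearly to $M_A$. *)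

theory Defs
  imports Complex_Main
begin

(* Complex vector spaces are given by an abstract scalar multiplication
   sm :: complex => 'x => 'x satisfying the vector_space axioms. *)

definition clin :: "(complex \<Rightarrow> 'x::ab_group_add \<Rightarrow> 'x) \<Rightarrow> (complex \<Rightarrow> 'z::ab_group_add \<Rightarrow> 'z)
   \<Rightarrow> ('x \<Rightarrow> 'z) \<Rightarrow> bool" where
  "clin sX sZ f \<longleftrightarrow> (\<forall>x y. f (x + y) = f x + f y) \<and> (\<forall>c x. f (sX c x) = sZ c (f x))"

definition cbil :: "(complex \<Rightarrow> 'x::ab_group_add \<Rightarrow> 'x) \<Rightarrow> (complex \<Rightarrow> 'y::ab_group_add \<Rightarrow> 'y)
   \<Rightarrow> (complex \<Rightarrow> 'z::ab_group_add \<Rightarrow> 'z) \<Rightarrow> ('x \<Rightarrow> 'y \<Rightarrow> 'z) \<Rightarrow> bool" where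
  "cbil sX sY sZ f \<longleftrightarrow> (\<forall>y. clin sX sZ (\<lambda>x. f x y)) \<and> (\<forall>x. clin sY sZ (f x))"

definition ctril :: "(complex \<Rightarrow> 'x::ab_group_add \<Rightarrow> 'x) \<Rightarrow> (complex \<Rightarrow> 'y::ab_group_add \<Rightarrow> 'y)
   \<Rightarrow> (complex \<Rightarrow> 'w::ab_group_add \<Rightarrow> 'w) \<Rightarrow> ('x \<Rightarrow> 'y \<Rightarrow> 'w \<Rightarrow> complex) \<Rightarrow> bool" where
  "ctril sX sY sW f \<longleftrightarrow> (\<forall>y w. clin sX (*) (\<lambda>x. f x y w)) \<and> (\<forall>x w. clin sY (*) (\<lambda>y. f x y w))
      \<and> (\<forall>x y. clin sW (*) (f x y))"

(* Elements of a tensor product X \<otimes> Y are represented by finite lists of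
   pure tensors [(x1,y1),...] standing for x1\<otimes>y1 + ... ; two representatives
   denote the same tensor iff every linear functional on X \<otimes> Y (i.e. every
   complex-bilinear form on X \<times> Y) takes the same value on them. *)
definition teq2 :: "(complex \<Rightarrow> 'x::ab_group_add \<Rightarrow> 'x) \<Rightarrow> (complex \<Rightarrow> 'y::ab_group_add \<Rightarrow> 'y)
   \<Rightarrow> ('x \<times> 'y) list \<Rightarrow> ('x \<times> 'y) list \<Rightarrow> bool" where
  "teq2 sX sY xs ys \<longleftrightarrow> (\<forall>\<phi>. cbil sX sY (*) \<phi> \<longrightarrow>
      (\<Sum>(x,y)\<leftarrow>xs. \<phi> x y) = (\<Sum>(x,y)\<leftarrow>ys. \<phi> x y))"

definition teq3 :: "(complex \<Rightarrow> 'x::ab_group_add \<Rightarrow> 'x) \<Rightarrow> (complex \<Rightarrow> 'y::ab_group_add \<Rightarrow> 'y)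
   \<Rightarrow> (complex \<Rightarrow> 'w::ab_group_add \<Rightarrow> 'w) \<Rightarrow> ('x \<times> 'y \<times> 'w) list \<Rightarrow> ('x \<times> 'y \<times> 'w) list \<Rightarrow> bool" where
  "teq3 sX sY sW xs ys \<longleftrightarrow> (\<forall>\<phi>. ctril sX sY sW \<phi> \<longrightarrow>
      (\<Sum>(x,y,w)\<leftarrow>xs. \<phi> x y w) = (\<Sum>(x,y,w)\<leftarrow>ys. \<phi> x y w))"

definition calg :: "(complex \<Rightarrow> 'a::comm_ring_1 \<Rightarrow> 'a) \<Rightarrow> bool" where
  "calg sm \<longleftrightarrow> vector_space sm \<and> (\<forall>c x y. sm c (x * y) = sm c x * y)"

(* Commutative and cocommutative Hopf algebra over C with coproduct \<Delta>
   (\<Delta> x is a representative of the tensor \<Delta>(x) = \<Sum> x' \<otimes> x''),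
   counit \<eta> and antipode S. *)
definition cc_hopf :: "(complex \<Rightarrow> 'm::comm_ring_1 \<Rightarrow> 'm) \<Rightarrow> ('m \<Rightarrow> ('m \<times> 'm) list)
   \<Rightarrow> ('m \<Rightarrow> complex) \<Rightarrow> ('m \<Rightarrow> 'm) \<Rightarrow> bool" where
  "cc_hopf sm \<Delta> \<eta> S \<longleftrightarrow>
     calg sm
   \<and> (\<forall>x y. teq2 sm sm (\<Delta> (x + y)) (\<Delta> x @ \<Delta> y))
   \<and> (\<forall>c x. teq2 sm sm (\<Delta> (sm c x)) [(sm c a, b). (a, b) \<leftarrow> \<Delta> x])
   \<and> (\<forall>x y. teq2 sm sm (\<Delta> (x * y)) [(a * c, b * d). (a, b) \<leftarrow> \<Delta> x, (c, d) \<leftarrow> \<Delta> y])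
   \<and> teq2 sm sm (\<Delta> 1) [(1, 1)]
   \<and> (\<forall>x. teq3 sm sm sm [(a1, a2, b). (a, b) \<leftarrow> \<Delta> x, (a1, a2) \<leftarrow> \<Delta> a]
                         [(a, b1, b2). (a, b) \<leftarrow> \<Delta> x, (b1, b2) \<leftarrow> \<Delta> b])
   \<and> clin sm (*) \<eta>
   \<and> (\<forall>x y. \<eta> (x * y) = \<eta> x * \<eta> y) \<and> \<eta> 1 = 1
   \<and> (\<forall>x. (\<Sum>(a, b)\<leftarrow>\<Delta> x. sm (\<eta> a) b) = x)
   \<and> (\<forall>x. (\<Sum>(a, b)\<leftarrow>\<Delta> x. sm (\<eta> b) a) = x)
   \<and> clin sm sm S
   \<and> (\<forall>x. (\<Sum>(a, b)\<leftarrow>\<Delta> x. S a * b) = sm (\<eta> x) 1)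
   \<and> (\<forall>x. (\<Sum>(a, b)\<leftarrow>\<Delta> x. a * S b) = sm (\<eta> x) 1)
   \<and> (\<forall>x. teq2 sm sm (\<Delta> x) (map prod.swap (\<Delta> x)))"

(* A-valued bicharacter: a linear map M \<otimes> M \<rightarrow> A, given as a bilinear map *)
definition bichar :: "(complex \<Rightarrow> 'm::comm_ring_1 \<Rightarrow> 'm) \<Rightarrow> (complex \<Rightarrow> 'a::comm_ring_1 \<Rightarrow> 'a)
   \<Rightarrow> ('m \<Rightarrow> ('m \<times> 'm) list) \<Rightarrow> ('m \<Rightarrow> complex) \<Rightarrow> ('m \<Rightarrow> 'm \<Rightarrow> 'a) \<Rightarrow> bool" where
  "bichar smM smA \<Delta> \<eta> r \<longleftrightarrow>
     cbil smM smM smA r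
   \<and> (\<forall>a. r 1 a = smA (\<eta> a) 1 \<and> r a 1 = smA (\<eta> a) 1)
   \<and> (\<forall>a b c. r (a * b) c = (\<Sum>(c1, c2)\<leftarrow>\<Delta> c. r a c1 * r b c2))
   \<and> (\<forall>a b c. r a (b * c) = (\<Sum>(a1, a2)\<leftarrow>\<Delta> a. r a1 b * r a2 c))"

definition conv :: "('m \<Rightarrow> ('m \<times> 'm) list) \<Rightarrow> ('m \<Rightarrow> 'm \<Rightarrow> 'a::comm_ring_1)
   \<Rightarrow> ('m \<Rightarrow> 'm \<Rightarrow> 'a) \<Rightarrow> 'm \<Rightarrow> 'm \<Rightarrow> 'a" where
  "conv \<Delta> r t a b = (\<Sum>((a1, a2), (b1, b2))\<leftarrow>List.product (\<Delta> a) (\<Delta> b). r a1 b1 * t a2 b2)"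

definition transp :: "('m \<Rightarrow> 'm \<Rightarrow> 'a) \<Rightarrow> 'm \<Rightarrow> 'm \<Rightarrow> 'a" where
  "transp r a b = r b a"

definition symmetric_bichar :: "('m \<Rightarrow> 'm \<Rightarrow> 'a) \<Rightarrow> bool" where
  "symmetric_bichar t \<longleftrightarrow> t = transp t"

definition symmetrization :: "('m \<Rightarrow> ('m \<times> 'm) list) \<Rightarrow> ('m \<Rightarrow> 'm \<Rightarrow> 'a::comm_ring_1)
   \<Rightarrow> 'm \<Rightarrow> 'm \<Rightarrow> 'a" where
  "symmetrization \<Delta> r = conv \<Delta> r (transp r)"

(* Elements of M_A = M \<otimes> A are represented by lists of pure tensors (m, \<alpha>) ~ m \<otimes> \<alpha>. *)

definition bulletM :: "('m::comm_ring_1 \<Rightarrow> ('m \<times> 'm) list) \<Rightarrow> ('m \<Rightarrow> 'm \<Rightarrow> 'a)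
   \<Rightarrow> 'm \<Rightarrow> 'm \<Rightarrow> ('m \<times> 'a) list" where
  "bulletM \<Delta> t a b = [(a1 * b1, t a2 b2). (a1, a2) \<leftarrow> \<Delta> a, (b1, b2) \<leftarrow> \<Delta> b]"

(* A-bilinear extension of \<bullet>_t to M_A *)
definition bulletA :: "('m::comm_ring_1 \<Rightarrow> ('m \<times> 'm) list) \<Rightarrow> ('m \<Rightarrow> 'm \<Rightarrow> 'a::comm_ring_1)
   \<Rightarrow> ('m \<times> 'a) list \<Rightarrow> ('m \<times> 'a) list \<Rightarrow> ('m \<times> 'a) list" where
  "bulletA \<Delta> t xs ys = concat [[(n, \<gamma> * (\<alpha> * \<beta>)). (n, \<gamma>) \<leftarrow> bulletM \<Delta> t m m'].
                                  (m, \<alpha>) \<leftarrow> xs, (m', \<beta>) \<leftarrow> ys]"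

definition EQ :: "('m \<Rightarrow> ('m \<times> 'm) list) \<Rightarrow> ('m \<Rightarrow> 'm \<Rightarrow> 'a) \<Rightarrow> 'm \<Rightarrow> ('m \<times> 'a) list" where
  "EQ \<Delta> r m = [(m3, r m1 m2). (p, m3) \<leftarrow> \<Delta> m, (m1, m2) \<leftarrow> \<Delta> p]"

(* A-linear extension of EQ_r to M_A *)
definition EQA :: "('m \<Rightarrow> ('m \<times> 'm) list) \<Rightarrow> ('m \<Rightarrow> 'm \<Rightarrow> 'a::comm_ring_1)
   \<Rightarrow> ('m \<times> 'a) list \<Rightarrow> ('m \<times> 'a) list" where
  "EQA \<Delta> r xs = concat [[(n, \<beta> * \<alpha>). (n, \<beta>) \<leftarrow> EQ \<Delta> r m]. (m, \<alpha>) \<leftarrow> xs]"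

end

theory Submission
  imports Defs
begin


lemma sum_list_concat': "sum_list (concat xss) = (\<Sum>xs\<leftarrow>xss. sum_list xs :: 'b::monoid_add)"
  by (induction xss) simp_all

lemma sum_list_swap:
  "(\<Sum>x\<leftarrow>xs. \<Sum>y\<leftarrow>ys. f x y) = (\<Sum>y\<leftarrow>ys. \<Sum>x\<leftarrow>xs. f x y :: 'b::comm_monoid_add)"
  by (induction xs) (simp_all add: sum_list_addf)

lemma sw2:
  "(\<Sum>(a,b)\<leftarrow>xs. \<Sum>(c,d)\<leftarrow>ys. f a b c d) = (\<Sum>(c,d)\<leftarrow>ys. \<Sum>(a,b)\<leftarrow>xs. f a b c d :: 'b::comm_monoid_add)"
  using sum_list_swap[where f="\<lambda>p q. f (fst p) (snd p) (fst q) (snd q)" and xs=xs and ys=ys]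
  by (simp add: split_def)

locale hopfl =
  fixes smM :: "complex \<Rightarrow> 'm::comm_ring_1 \<Rightarrow> 'm" and D :: "'m \<Rightarrow> ('m \<times> 'm) list"
    and \<eta> :: "'m \<Rightarrow> complex" and S :: "'m \<Rightarrow> 'm"
  assumes hopf: "cc_hopf smM D \<eta> S"
begin

definition bil :: "('m \<Rightarrow> 'm \<Rightarrow> complex) \<Rightarrow> bool" where
  "bil \<psi> \<longleftrightarrow> (\<forall>x y z. \<psi> (x+y) z = \<psi> x z + \<psi> y z \<and> \<psi> z (x+y) = \<psi> z x + \<psi> z y)
     \<and> (\<forall>c x z. \<psi> (smM c x) z = c * \<psi> x z \<and> \<psi> z (smM c x) = c * \<psi> z x)"

definition tril :: "('m \<Rightarrow> 'm \<Rightarrow> 'm \<Rightarrow> complex) \<Rightarrow> bool" where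
  "tril T \<longleftrightarrow> (\<forall>x y z w. T (x+y) z w = T x z w + T y z w \<and> T z (x+y) w = T z x w + T z y w
                 \<and> T z w (x+y) = T z w x + T z w y)
     \<and> (\<forall>c x z w. T (smM c x) z w = c * T x z w \<and> T z (smM c x) w = c * T z x w
                 \<and> T z w (smM c x) = c * T z w x)"

lemma bil_cbil: "bil \<psi> \<Longrightarrow> cbil smM smM (*) \<psi>"
  by (auto simp: bil_def cbil_def clin_def)

lemma tril_ctril: "tril T \<Longrightarrow> ctril smM smM smM T"
  by (auto simp: tril_def ctril_def clin_def)

lemma D_add: "bil \<psi> \<Longrightarrow> (\<Sum>(u,v)\<leftarrow>D (x+y). \<psi> u v) = (\<Sum>(u,v)\<leftarrow>D x. \<psi> u v) + (\<Sum>(u,v)\<leftarrow>D y. \<psi> u v)"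
  using hopf bil_cbil unfolding cc_hopf_def teq2_def by auto

lemma D_smult: "bil \<psi> \<Longrightarrow> (\<Sum>(u,v)\<leftarrow>D (smM c x). \<psi> u v) = c * (\<Sum>(u,v)\<leftarrow>D x. \<psi> u v)"
proof -
  assume b: "bil \<psi>"
  have "(\<Sum>(u,v)\<leftarrow>D (smM c x). \<psi> u v) = (\<Sum>(u,v)\<leftarrow>[(smM c a, b). (a, b) \<leftarrow> D x]. \<psi> u v)"
    using hopf bil_cbil[OF b] unfolding cc_hopf_def teq2_def by blast
  also have "\<dots> = (\<Sum>(u,v)\<leftarrow>D x. c * \<psi> u v)"
    using b by (simp add: bil_def comp_def split_def)
  finally show ?thesis by (simp add: sum_list_const_mult split_def)
qed

lemma D_mult: "bil \<psi> \<Longrightarrow> (\<Sum>(u,v)\<leftarrow>D (x*y). \<psi> u v) = (\<Sum>(a1,a2)\<leftarrow>D x. \<Sum>(b1,b2)\<leftarrow>D y. \<psi> (a1*b1) (a2*b2))"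
proof -
  assume b: "bil \<psi>"
  have "(\<Sum>(u,v)\<leftarrow>D (x*y). \<psi> u v) = (\<Sum>(u,v)\<leftarrow>[(a * c, b * d). (a, b) \<leftarrow> D x, (c, d) \<leftarrow> D y]. \<psi> u v)"
    using hopf bil_cbil[OF b] unfolding cc_hopf_def teq2_def by blast
  then show ?thesis by (simp add: sum_list_concat' map_concat comp_def split_def)
qed

lemma D_cocomm: "bil \<psi> \<Longrightarrow> (\<Sum>(u,v)\<leftarrow>D x. \<psi> u v) = (\<Sum>(u,v)\<leftarrow>D x. \<psi> v u)"
proof -
  assume b: "bil \<psi>"
  have "(\<Sum>(u,v)\<leftarrow>D x. \<psi> u v) = (\<Sum>(u,v)\<leftarrow>map prod.swap (D x). \<psi> u v)"
    using hopf bil_cbil[OF b] unfolding cc_hopf_def teq2_def by blast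
  then show ?thesis by (simp add: comp_def split_def)
qed

lemma D_coassoc: "tril T \<Longrightarrow> (\<Sum>(a,b)\<leftarrow>D x. \<Sum>(a1,a2)\<leftarrow>D a. T a1 a2 b) = (\<Sum>(a,b)\<leftarrow>D x. \<Sum>(b1,b2)\<leftarrow>D b. T a b1 b2)"
proof -
  assume b: "tril T"
  have "(\<Sum>(u,v,w)\<leftarrow>[(a1, a2, b). (a, b) \<leftarrow> D x, (a1, a2) \<leftarrow> D a]. T u v w) =
        (\<Sum>(u,v,w)\<leftarrow>[(a, b1, b2). (a, b) \<leftarrow> D x, (b1, b2) \<leftarrow> D b]. T u v w)"
    using hopf tril_ctril[OF b] unfolding cc_hopf_def teq3_def by blast
  then show ?thesis by (simp add: sum_list_concat' map_concat comp_def split_def)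
qed

end
context hopfl begin

fun cop :: "nat \<Rightarrow> 'm \<Rightarrow> 'm list list" where
  "cop 0 a = [[a]]"
| "cop (Suc n) a = concat (map (\<lambda>(x,y). map (\<lambda>xs. xs @ [y]) (cop n x)) (D a))"

definition SW :: "nat \<Rightarrow> 'm \<Rightarrow> ('m list \<Rightarrow> complex) \<Rightarrow> complex" where
  "SW n a F = (\<Sum>xs\<leftarrow>cop n a. F xs)"

lemma SW_0[simp]: "SW 0 a F = F [a]"
  by (simp add: SW_def)

lemma SW_Suc: "SW (Suc n) a F = (\<Sum>(x,y)\<leftarrow>D a. SW n x (\<lambda>xs. F (xs @ [y])))"
  by (simp add: SW_def sum_list_concat' map_concat comp_def split_def)

lemma cop_len: "xs \<in> set (cop n a) \<Longrightarrow> length xs = Suc n"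
  by (induction n arbitrary: a xs) auto

lemma SW_cong: "(\<And>xs. length xs = Suc n \<Longrightarrow> F xs = G xs) \<Longrightarrow> SW n a F = SW n a G"
  unfolding SW_def by (rule arg_cong[where f=sum_list], rule map_cong) (auto dest: cop_len)

lemma SW_add: "SW n a (\<lambda>xs. F xs + G xs) = SW n a F + SW n a G"
  by (simp add: SW_def sum_list_addf)

lemma SW_cmult: "SW n a (\<lambda>xs. c * F xs) = c * SW n a F"
  by (simp add: SW_def sum_list_const_mult)

lemma SW_sum2: "SW n a (\<lambda>xs. \<Sum>(u,v)\<leftarrow>L. T u v xs) = (\<Sum>(u,v)\<leftarrow>L. SW n a (T u v))"
  unfolding SW_def using sum_list_swap[where f="\<lambda>xs p. T (fst p) (snd p) xs" and xs="cop n a" and ys=L]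
  by (simp add: split_def)

definition ml :: "nat \<Rightarrow> ('m list \<Rightarrow> complex) \<Rightarrow> bool" where
 "ml n F \<longleftrightarrow> (\<forall>xs i. length xs = n \<longrightarrow> i < n \<longrightarrow>
     (\<forall>x y. F (xs[i := x + y]) = F (xs[i := x]) + F (xs[i := y])) \<and>
     (\<forall>c x. F (xs[i := smM c x]) = c * F (xs[i := x])))"

lemma ml_mid:
  assumes "ml m F" "length xs + length ys + 1 = m"
  shows "F (xs @ (x+y) # ys) = F (xs @ x # ys) + F (xs @ y # ys)"
    and "F (xs @ smM c x # ys) = c * F (xs @ x # ys)"
proof -
  let ?zs = "xs @ x # ys"
  have l: "length ?zs = m" "length xs < m" using assms(2) by auto
  have u: "\<And>z. ?zs[length xs := z] = xs @ z # ys" by simp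
  have "F (?zs[length xs := x+y]) = F (?zs[length xs := x]) + F (?zs[length xs := y])"
    using assms(1) l unfolding ml_def by blast
  then show "F (xs @ (x+y) # ys) = F (xs @ x # ys) + F (xs @ y # ys)" by (simp only: u)
  have "F (?zs[length xs := smM c x]) = c * F (?zs[length xs := x])"
    using assms(1) l unfolding ml_def by blast
  then show "F (xs @ smM c x # ys) = c * F (xs @ x # ys)" by (simp only: u)
qed

lemma ml_app: "ml (Suc m) F \<Longrightarrow> ml m (\<lambda>xs. F (xs @ [v]))"
  unfolding ml_def
proof (intro allI impI)
  fix xs :: "'m list" and i assume a: "\<forall>xs i. length xs = Suc m \<longrightarrow> i < Suc m \<longrightarrow>
     (\<forall>x y. F (xs[i := x + y]) = F (xs[i := x]) + F (xs[i := y])) \<and>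
     (\<forall>c x. F (xs[i := smM c x]) = c * F (xs[i := x]))" and l: "length xs = m" "i < m"
  have l2: "length (xs @ [v]) = Suc m" "i < Suc m" using l by auto
  have u: "\<And>z. (xs @ [v])[i := z] = xs[i := z] @ [v]" using l by (simp add: list_update_append1)
  show "(\<forall>x y. F (xs[i := x + y] @ [v]) = F (xs[i := x] @ [v]) + F (xs[i := y] @ [v])) \<and>
       (\<forall>c x. F (xs[i := smM c x] @ [v]) = c * F (xs[i := x] @ [v]))"
    using a[rule_format, OF l2] unfolding u by blast
qed

lemma ml_SW: assumes "\<And>ys. ml m (\<lambda>xs. G xs ys)" shows "ml m (\<lambda>xs. SW n b (G xs))"
  unfolding ml_def
proof (intro allI impI conjI)
  fix xs :: "'m list" and i x y c assume l: "length xs = m" "i < m"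
  have "SW n b (G (xs[i := x + y])) = SW n b (\<lambda>ys. G (xs[i := x]) ys + G (xs[i := y]) ys)"
    by (rule SW_cong) (use assms l in \<open>auto simp: ml_def\<close>)
  then show "SW n b (G (xs[i := x + y])) = SW n b (G (xs[i := x])) + SW n b (G (xs[i := y]))"
    by (simp add: SW_add)
  have "SW n b (G (xs[i := smM c x])) = SW n b (\<lambda>ys. c * G (xs[i := x]) ys)"
    by (rule SW_cong) (use assms l in \<open>auto simp: ml_def\<close>)
  then show "SW n b (G (xs[i := smM c x])) = c * SW n b (G (xs[i := x]))"
    by (simp add: SW_cmult)
qed

lemma ml_sum: "(\<And>u v. ml m (T u v)) \<Longrightarrow> ml m (\<lambda>xs. \<Sum>(u,v)\<leftarrow>L. T u v xs)"
  unfolding ml_def by (simp add: sum_list_addf sum_list_const_mult split_def)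

lemma SW_lin:
  assumes "ml (Suc n) F"
  shows "SW n (x+y) F = SW n x F + SW n y F \<and> SW n (smM c x) F = c * SW n x F"
  using assms
proof (induction n arbitrary: F x y c)
  case 0
  have "F ([z][0 := x+y]) = F ([z][0 := x]) + F ([z][0 := y])" "F ([z][0 := smM c x]) = c * F ([z][0 := x])" for z
    using 0 unfolding ml_def by (auto dest: spec[of _ "[z]"])
  from this[of x] show ?case by simp
next
  case (Suc n)
  let ?\<psi> = "\<lambda>u v. SW n u (\<lambda>xs. F (xs @ [v]))"
  have "bil ?\<psi>"
    unfolding bil_def
  proof (intro conjI allI)
    fix x y z c
    show "?\<psi> (x+y) z = ?\<psi> x z + ?\<psi> y z" "?\<psi> (smM c x) z = c * ?\<psi> x z"
      using Suc.IH[OF ml_app[OF Suc.prems]] by blast+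
    have "?\<psi> z (x+y) = SW n z (\<lambda>xs. F (xs @ [x]) + F (xs @ [y]))"
      by (rule SW_cong) (use ml_mid(1)[OF Suc.prems, where ys="[]"] in auto)
    then show "?\<psi> z (x+y) = ?\<psi> z x + ?\<psi> z y" by (simp add: SW_add)
    have "?\<psi> z (smM c x) = SW n z (\<lambda>xs. c * F (xs @ [x]))"
      by (rule SW_cong) (use ml_mid(2)[OF Suc.prems, where ys="[]"] in auto)
    then show "?\<psi> z (smM c x) = c * ?\<psi> z x" by (simp add: SW_cmult)
  qed
  then have b: "bil ?\<psi>" .
  show ?case
    by (simp only: SW_Suc D_add[OF b] D_smult[OF b])
qed

end


context hopfl begin

lemma bil_step:
  assumes "ml (Suc (Suc n)) F"
  shows "bil (\<lambda>u v. SW n u (\<lambda>xs. F (xs @ [v])))"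
  unfolding bil_def
proof (intro conjI allI)
  fix x y z c
  let ?\<psi> = "\<lambda>u v. SW n u (\<lambda>xs. F (xs @ [v]))"
  show "?\<psi> (x+y) z = ?\<psi> x z + ?\<psi> y z" "?\<psi> (smM c x) z = c * ?\<psi> x z"
    using SW_lin[OF ml_app[OF assms]] by blast+
  have "?\<psi> z (x+y) = SW n z (\<lambda>xs. F (xs @ [x]) + F (xs @ [y]))"
    by (rule SW_cong) (use ml_mid(1)[OF assms, where ys="[]"] in auto)
  then show "?\<psi> z (x+y) = ?\<psi> z x + ?\<psi> z y" by (simp add: SW_add)
  have "?\<psi> z (smM c x) = SW n z (\<lambda>xs. c * F (xs @ [x]))"
    by (rule SW_cong) (use ml_mid(2)[OF assms, where ys="[]"] in auto)
  then show "?\<psi> z (smM c x) = c * ?\<psi> z x" by (simp add: SW_cmult)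
qed

lemma SW_mult:
  assumes "ml (Suc n) F"
  shows "SW n (a*b) F = SW n a (\<lambda>xs. SW n b (\<lambda>ys. F (map2 (*) xs ys)))"
  using assms
proof (induction n arbitrary: F a b)
  case 0
  then show ?case by simp
next
  case (Suc n)
  have "SW (Suc n) (a*b) F = (\<Sum>(a1,a2)\<leftarrow>D a. \<Sum>(b1,b2)\<leftarrow>D b. SW n (a1*b1) (\<lambda>xs. F (xs @ [a2*b2])))"
    unfolding SW_Suc by (rule D_mult[OF bil_step[OF Suc.prems]])
  also have "\<dots> = (\<Sum>(a1,a2)\<leftarrow>D a. \<Sum>(b1,b2)\<leftarrow>D b. SW n a1 (\<lambda>xs. SW n b1 (\<lambda>ys. F (map2 (*) xs ys @ [a2*b2]))))"
    using Suc.IH[OF ml_app[OF Suc.prems]] by simp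
  also have "\<dots> = (\<Sum>(a1,a2)\<leftarrow>D a. SW n a1 (\<lambda>xs. \<Sum>(b1,b2)\<leftarrow>D b. SW n b1 (\<lambda>ys. F (map2 (*) (xs @ [a2]) (ys @ [b2])))))"
  proof -
    have inner: "\<And>xs b1 b2 a2. length xs = Suc n \<Longrightarrow> SW n b1 (\<lambda>ys. F (map2 (*) (xs@[a2]) (ys@[b2])))
       = SW n b1 (\<lambda>ys. F (map2 (*) xs ys @ [a2*b2]))"
      by (rule SW_cong) simp
    have "\<And>a1 a2. SW n a1 (\<lambda>xs. \<Sum>(b1,b2)\<leftarrow>D b. SW n b1 (\<lambda>ys. F (map2 (*) (xs@[a2]) (ys@[b2]))))
       = SW n a1 (\<lambda>xs. \<Sum>(b1,b2)\<leftarrow>D b. SW n b1 (\<lambda>ys. F (map2 (*) xs ys @ [a2*b2])))"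
      by (rule SW_cong) (simp add: inner)
    then show ?thesis by (simp only: SW_sum2)
  qed
  also have "\<dots> = SW (Suc n) a (\<lambda>xs. SW (Suc n) b (\<lambda>ys. F (map2 (*) xs ys)))"
    by (simp add: SW_Suc)
  finally show ?case .
qed


definition spl :: "nat \<Rightarrow> ('m list \<Rightarrow> complex) \<Rightarrow> 'm list \<Rightarrow> complex" where
  "spl i F = (\<lambda>xs. \<Sum>(u,v)\<leftarrow>D (xs!i). F (take i xs @ [u,v] @ drop (Suc i) xs))"

lemma ml_lin2:
  assumes "ml m F" "length xs + length ys + 2 = m"
  shows "bil (\<lambda>u v. F (xs @ u # v # ys))"
proof -
  have a: "ml m F" "length xs + length (v # ys) + 1 = m" "length (xs @ [u]) + length ys + 1 = m" for u v
    using assms by auto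
  show ?thesis unfolding bil_def
    using ml_mid[OF a(1) a(2)] ml_mid[OF a(1) a(3)] by simp
qed

lemma tril_step:
  assumes "ml (Suc (Suc (Suc n))) F"
  shows "tril (\<lambda>p q w. SW n p (\<lambda>xs. F (xs @ [q, w])))"
proof -
  have m1: "ml (Suc n) (\<lambda>xs. F (xs @ [q, w]))" for q w
    using ml_app[OF ml_app[OF assms], of q w] by simp
  have b: "bil (\<lambda>u v. F (xs @ u # v # []))" if "length xs = Suc n" for xs
    using ml_lin2[OF assms, of xs "[]"] that by simp
  show ?thesis unfolding tril_def
  proof (intro conjI allI)
    fix x y z w c
    let ?T = "\<lambda>p q w. SW n p (\<lambda>xs. F (xs @ [q, w]))"
    show "?T (x+y) z w = ?T x z w + ?T y z w" "?T (smM c x) z w = c * ?T x z w"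
      using SW_lin[OF m1] by blast+
    have "?T z (x+y) w = SW n z (\<lambda>xs. F (xs @ [x, w]) + F (xs @ [y, w]))"
      by (rule SW_cong) (use b in \<open>auto simp: bil_def\<close>)
    then show "?T z (x+y) w = ?T z x w + ?T z y w" by (simp add: SW_add)
    have "?T z w (x+y) = SW n z (\<lambda>xs. F (xs @ [w, x]) + F (xs @ [w, y]))"
      by (rule SW_cong) (use b in \<open>auto simp: bil_def\<close>)
    then show "?T z w (x+y) = ?T z w x + ?T z w y" by (simp add: SW_add)
    have "?T z (smM c x) w = SW n z (\<lambda>xs. c * F (xs @ [x, w]))"
      by (rule SW_cong) (use b in \<open>auto simp: bil_def\<close>)
    then show "?T z (smM c x) w = c * ?T z x w" by (simp add: SW_cmult)
    have "?T z w (smM c x) = SW n z (\<lambda>xs. c * F (xs @ [w, x]))"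
      by (rule SW_cong) (use b in \<open>auto simp: bil_def\<close>)
    then show "?T z w (smM c x) = c * ?T z w x" by (simp add: SW_cmult)
  qed
qed

lemma SW_split:
  assumes "ml (Suc (Suc n)) F" "i \<le> n"
  shows "SW (Suc n) a F = SW n a (spl i F)"
  using assms
proof (induction n arbitrary: a F i)
  case 0
  then show ?case by (simp add: SW_Suc spl_def)
next
  case (Suc n)
  show ?case
  proof (cases "i \<le> n")
    case True
    have "SW (Suc (Suc n)) a F = (\<Sum>(x,y)\<leftarrow>D a. SW n x (spl i (\<lambda>xs. F (xs @ [y]))))"
      unfolding SW_Suc[of "Suc n"] using Suc.IH[OF ml_app[OF Suc.prems(1)] True] by simp
    also have "\<dots> = (\<Sum>(x,y)\<leftarrow>D a. SW n x (\<lambda>xs. spl i F (xs @ [y])))"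
    proof -
      have "\<And>x y. SW n x (spl i (\<lambda>xs. F (xs @ [y]))) = SW n x (\<lambda>xs. spl i F (xs @ [y]))"
        by (rule SW_cong) (use True in \<open>simp add: spl_def nth_append\<close>)
      then show ?thesis by simp
    qed
    also have "\<dots> = SW (Suc n) a (spl i F)" by (simp add: SW_Suc)
    finally show ?thesis .
  next
    case False
    then have i: "i = Suc n" using Suc.prems by simp
    have "SW (Suc (Suc n)) a F = (\<Sum>(x,y)\<leftarrow>D a. \<Sum>(x1,x2)\<leftarrow>D x. SW n x1 (\<lambda>xs. F (xs @ [x2, y])))"
      by (simp add: SW_Suc)
    also have "\<dots> = (\<Sum>(x,y)\<leftarrow>D a. \<Sum>(y1,y2)\<leftarrow>D y. SW n x (\<lambda>xs. F (xs @ [y1, y2])))"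
      by (rule D_coassoc[OF tril_step[OF Suc.prems(1)]])
    also have "\<dots> = (\<Sum>(x,y)\<leftarrow>D a. SW n x (\<lambda>xs. \<Sum>(y1,y2)\<leftarrow>D y. F (xs @ [y1, y2])))"
      by (simp only: SW_sum2)
    also have "\<dots> = (\<Sum>(x,y)\<leftarrow>D a. SW n x (\<lambda>xs. spl i F (xs @ [y])))"
    proof -
      have "\<And>x y. SW n x (\<lambda>xs. \<Sum>(y1,y2)\<leftarrow>D y. F (xs @ [y1, y2])) = SW n x (\<lambda>xs. spl i F (xs @ [y]))"
        by (rule SW_cong) (use i in \<open>simp add: spl_def nth_append\<close>)
      then show ?thesis by simp
    qed
    also have "\<dots> = SW (Suc n) a (spl i F)" by (simp add: SW_Suc)
    finally show ?thesis .
  qed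
qed


lemma spl_eval: "length ys = i \<Longrightarrow> spl i F (ys @ w # zs) = (\<Sum>(u,v)\<leftarrow>D w. F (ys @ u # v # zs))"
  by (simp add: spl_def nth_append)

lemma ml_split:
  assumes m: "ml (Suc (Suc n)) F" and i: "i \<le> n"
  shows "ml (Suc n) (spl i F)"
  unfolding ml_def
proof (intro allI impI)
  fix xs :: "'m list" and j assume l: "length xs = Suc n" "j < Suc n"
  define ys where "ys = take i xs"
  define w where "w = xs ! i"
  define zs where "zs = drop (Suc i) xs"
  have xs: "xs = ys @ w # zs" unfolding ys_def w_def zs_def using l i by (simp add: id_take_nth_drop)
  have ly: "length ys = i" using l i unfolding ys_def by simp
  have lz: "length ys + length zs + 1 = Suc n" using l xs by simp
  have mF: "\<And>zs'. length zs' = Suc (Suc n) \<Longrightarrow> k < Suc (Suc n) \<Longrightarrow>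
     F (zs'[k := x + y]) = F (zs'[k := x]) + F (zs'[k := y]) \<and> F (zs'[k := smM c x]) = c * F (zs'[k := x])" for k x y c
    using m unfolding ml_def by blast
  show "(\<forall>x y. spl i F (xs[j := x + y]) = spl i F (xs[j := x]) + spl i F (xs[j := y])) \<and>
        (\<forall>c x. spl i F (xs[j := smM c x]) = c * spl i F (xs[j := x]))"
  proof (cases j i rule: linorder_cases)
    case less
    have e: "xs[j := z] = ys[j := z] @ w # zs" for z using xs less ly by (simp add: list_update_append1)
    have e2: "ys[j := z] @ u # v # zs = (ys @ u # v # zs)[j := z]" for z u v using less ly
      by (simp add: list_update_append1)
    have ll: "length (ys @ u # v # zs) = Suc (Suc n)" "j < Suc (Suc n)" for u v using lz less ly by auto
    show ?thesis unfolding e spl_eval[OF length_list_update[of ys j, unfolded ly]] e2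
      using mF[OF ll] by (simp add: sum_list_addf sum_list_const_mult split_def)
  next
    case equal
    have e: "xs[j := z] = ys @ z # zs" for z using xs equal ly by (simp add: list_update_append)
    have b: "bil (\<lambda>u v. F (ys @ u # v # zs))" using ml_lin2[OF m] lz by simp
    show ?thesis unfolding e spl_eval[OF ly] using D_add[OF b] D_smult[OF b] by simp
  next
    case greater
    have e: "xs[j := z] = ys @ w # zs[j - Suc i := z]" for z using xs greater ly
      by (simp add: list_update_append split: nat.split) (metis Suc_diff_Suc nat.inject)
    have jj: "Suc j = Suc (Suc (length ys + (j - Suc i)))" using greater ly by simp
    have e2: "ys @ u # v # zs[j - Suc i := z] = (ys @ u # v # zs)[Suc j := z]" for z u v
      unfolding jj by (simp add: list_update_append)
    have ll: "length (ys @ u # v # zs) = Suc (Suc n)" "Suc j < Suc (Suc n)" for u v using lz l by auto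
    show ?thesis unfolding e spl_eval[OF ly] e2
      using mF[OF ll] by (simp add: sum_list_addf sum_list_const_mult split_def)
  qed
qed

definition swp :: "nat \<Rightarrow> 'm list \<Rightarrow> 'm list" where
  "swp i xs = xs[i := xs ! Suc i, Suc i := xs ! i]"

lemma swp_upd:
  assumes "Suc i < length xs" "j < length xs"
  shows "swp i (xs[j := z]) = (swp i xs)[(if j = i then Suc i else if j = Suc i then i else j) := z]"
  using assms unfolding swp_def by (auto simp: list_eq_iff_nth_eq nth_list_update)

lemma ml_swp:
  assumes m: "ml k F" and i: "Suc i < k"
  shows "ml k (\<lambda>xs. F (swp i xs))"
  unfolding ml_def
proof (intro allI impI)
  fix xs :: "'m list" and j assume l: "length xs = k" "j < k"
  let ?j = "if j = i then Suc i else if j = Suc i then i else j"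
  have l2: "length (swp i xs) = k" "?j < k" using l i by (auto simp: swp_def)
  show "(\<forall>x y. F (swp i (xs[j := x + y])) = F (swp i (xs[j := x])) + F (swp i (xs[j := y]))) \<and>
        (\<forall>c x. F (swp i (xs[j := smM c x])) = c * F (swp i (xs[j := x])))"
    unfolding swp_upd[OF i[folded l(1)] l(2)[folded l(1)]]
    using m l2 unfolding ml_def by blast
qed

lemma SW_swap:
  assumes m: "ml (Suc (Suc n)) F" and i: "i \<le> n"
  shows "SW (Suc n) a (\<lambda>xs. F (swp i xs)) = SW (Suc n) a F"
proof -
  have m2: "ml (Suc (Suc n)) (\<lambda>xs. F (swp i xs))" using ml_swp[OF m] i by simp
  have "SW (Suc n) a (\<lambda>xs. F (swp i xs)) = SW n a (spl i (\<lambda>xs. F (swp i xs)))"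
    by (rule SW_split[OF m2 i])
  also have "\<dots> = SW n a (spl i F)"
  proof (rule SW_cong)
    fix xs :: "'m list" assume l: "length xs = Suc n"
    define ys where "ys = take i xs"
    define w where "w = xs ! i"
    define zs where "zs = drop (Suc i) xs"
    have xs: "xs = ys @ w # zs" unfolding ys_def w_def zs_def using l i by (simp add: id_take_nth_drop)
    have ly: "length ys = i" using l i unfolding ys_def by simp
    have lz: "length ys + length zs + 2 = Suc (Suc n)" using l xs by simp
    have s: "swp i (ys @ u # v # zs) = ys @ v # u # zs" for u v
      using ly by (auto simp: swp_def nth_append list_update_append)
    have b: "bil (\<lambda>u v. F (ys @ v # u # zs))"
      using ml_lin2[OF m lz] unfolding bil_def by simp
    show "spl i (\<lambda>xs. F (swp i xs)) xs = spl i F xs"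
      unfolding xs spl_eval[OF ly] s using D_cocomm[OF b] by simp
  qed
  also have "\<dots> = SW (Suc n) a F" by (rule SW_split[OF m i, symmetric])
  finally show ?thesis .
qed

fun swps :: "nat list \<Rightarrow> 'm list \<Rightarrow> 'm list" where
  "swps [] xs = xs"
| "swps (i # js) xs = swps js (swp i xs)"

lemma ml_swps: "ml k F \<Longrightarrow> \<forall>i\<in>set js. Suc i < k \<Longrightarrow> ml k (\<lambda>xs. F (swps js xs))"
proof (induction js arbitrary: F)
  case Nil then show ?case by simp
next
  case (Cons i js)
  have "ml k (\<lambda>xs. F (swps js xs))" using Cons by simp
  from ml_swp[OF this] Cons.prems show ?case by simp
qed

lemma SW_swps: "ml (Suc (Suc n)) F \<Longrightarrow> \<forall>i\<in>set js. i \<le> n \<Longrightarrow>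
   SW (Suc n) a (\<lambda>xs. F (swps js xs)) = SW (Suc n) a F"
proof (induction js arbitrary: F)
  case Nil then show ?case by simp
next
  case (Cons i js)
  have "\<forall>i\<in>set js. Suc i < Suc (Suc n)" using Cons.prems(2) by auto
  from ml_swps[OF Cons.prems(1) this] have m: "ml (Suc (Suc n)) (\<lambda>xs. F (swps js xs))" .
  have "SW (Suc n) a (\<lambda>xs. F (swps (i # js) xs)) = SW (Suc n) a (\<lambda>xs. F (swps js xs))"
    using SW_swap[OF m, of i a] Cons.prems(2) by simp
  also have "\<dots> = SW (Suc n) a F" using Cons by simp
  finally show ?case .
qed

end



lemma sum2_mult_const: "(\<Sum>(u,v)\<leftarrow>L. f u v) * (c::'b::semiring_0) = (\<Sum>(u,v)\<leftarrow>L. f u v * c)"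
  by (induction L) (auto simp: distrib_right)
lemma sum2_const_mult: "(c::'b::semiring_0) * (\<Sum>(u,v)\<leftarrow>L. f u v) = (\<Sum>(u,v)\<leftarrow>L. c * f u v)"
  by (induction L) (auto simp: distrib_left)

lemma len6: "length xs = 6 \<Longrightarrow> \<exists>a b c d e f. xs = [a,b,c,d,e,f]"
  by (simp add: numeral_eq_Suc length_Suc_conv) blast
lemma len4: "length xs = 4 \<Longrightarrow> \<exists>a b c d. xs = [a,b,c,d]"
  by (simp add: numeral_eq_Suc length_Suc_conv) blast
lemma len3: "length xs = 3 \<Longrightarrow> \<exists>a b c. xs = [a,b,c]"
  by (simp add: numeral_eq_Suc length_Suc_conv) blast
lemma lt6: "(i::nat) < 6 \<Longrightarrow> i = 0 \<or> i = 1 \<or> i = 2 \<or> i = 3 \<or> i = 4 \<or> i = 5" by arith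
lemma lt3: "(i::nat) < 3 \<Longrightarrow> i = 0 \<or> i = 1 \<or> i = 2" by arith

lemma sum_product2: "(\<Sum>((a1, a2), (b1, b2))\<leftarrow>List.product xs ys. f a1 a2 b1 b2) =
   (\<Sum>(a1,a2)\<leftarrow>xs. \<Sum>(b1,b2)\<leftarrow>ys. f a1 a2 b1 b2 :: 'b::comm_monoid_add)"
  by (induction xs) (auto simp: split_def comp_def)

lemma conv_eq: "conv D r t a b = (\<Sum>(a1,a2)\<leftarrow>D a. \<Sum>(b1,b2)\<leftarrow>D b. r a1 b1 * t a2 b2)"
  unfolding conv_def by (rule sum_product2)

locale setup2 = hopfl smM D \<eta> S
  for smM :: "complex \<Rightarrow> 'm::comm_ring_1 \<Rightarrow> 'm" and D \<eta> S +
  fixes smA :: "complex \<Rightarrow> 'a::comm_ring_1 \<Rightarrow> 'a" and r s1 :: "'m \<Rightarrow> 'm \<Rightarrow> 'a"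
    and \<phi> :: "'m \<Rightarrow> 'a \<Rightarrow> complex"
  assumes calgA: "calg smA" and br: "bichar smM smA D \<eta> r" and bs: "bichar smM smA D \<eta> s1"
    and phi: "cbil smM smA (*) \<phi>"
begin

lemma phi_lin[simp]:
  "\<phi> (x+y) \<alpha> = \<phi> x \<alpha> + \<phi> y \<alpha>" "\<phi> (smM c x) \<alpha> = c * \<phi> x \<alpha>"
  "\<phi> x (\<alpha>+\<beta>) = \<phi> x \<alpha> + \<phi> x \<beta>" "\<phi> x (smA c \<alpha>) = c * \<phi> x \<alpha>"
  using phi unfolding cbil_def clin_def by auto

lemma r_lin[simp]:
  "r (x+y) z = r x z + r y z" "r (smM c x) z = smA c (r x z)"
  "r z (x+y) = r z x + r z y" "r z (smM c x) = smA c (r z x)"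
  using br unfolding bichar_def cbil_def clin_def by auto

lemma s_lin[simp]:
  "s1 (x+y) z = s1 x z + s1 y z" "s1 (smM c x) z = smA c (s1 x z)"
  "s1 z (x+y) = s1 z x + s1 z y" "s1 z (smM c x) = smA c (s1 z x)"
  using bs unfolding bichar_def cbil_def clin_def by auto

lemma smA_mult[simp]: "smA c x * y = smA c (x * y)" "y * smA c x = smA c (y * x)"
  using calgA unfolding calg_def by (metis mult.commute)+

lemma smM_mult[simp]: "smM c x * y = smM c (x * y)" "y * smM c x = smM c (y * x)"
  using hopf unfolding cc_hopf_def calg_def by (metis mult.commute)+

lemma phi_zero[simp]: "\<phi> m 0 = 0"
proof -
  have "\<phi> m 0 = \<phi> m 0 + \<phi> m 0" using phi_lin(3)[of m 0 0] by simp
  then show ?thesis by simp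
qed

lemma phi_sum2[simp]: "\<phi> m (\<Sum>(u,v)\<leftarrow>L. f u v) = (\<Sum>(u,v)\<leftarrow>L. \<phi> m (f u v))"
  by (induction L) auto

lemma r_mult1: "r (a*b) c = (\<Sum>(c1, c2)\<leftarrow>D c. r a c1 * r b c2)"
  and r_mult2: "r a (b*c) = (\<Sum>(a1, a2)\<leftarrow>D a. r a1 b * r a2 c)"
  using br unfolding bichar_def by auto

definition F0 :: "'a \<Rightarrow> 'm list \<Rightarrow> complex" where
  "F0 c xs = \<phi> (xs!2) (r (xs!0) (xs!1) * c)"

definition GR :: "'m list \<Rightarrow> 'm list \<Rightarrow> complex" where
  "GR X Y = \<phi> (X!2 * Y!2) (r (X!3) (Y!3) * r (Y!4) (X!4) * s1 (X!5) (Y!5) * (r (X!0) (X!1) * r (Y!0) (Y!1)))"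

lemma ml_F0: "ml 3 (F0 c)"
  unfolding ml_def
proof (intro allI impI)
  fix xs :: "'m list" and i :: nat assume "length xs = 3" "i < 3"
  then obtain a b d where "xs = [a,b,d]" using len3 by blast
  with lt3[OF \<open>i < 3\<close>] show "(\<forall>x y. F0 c (xs[i := x + y]) = F0 c (xs[i := x]) + F0 c (xs[i := y])) \<and>
       (\<forall>ca x. F0 c (xs[i := smM ca x]) = ca * F0 c (xs[i := x]))"
    by (auto simp: F0_def ring_distribs)
qed

lemma ml_GR1: "ml 6 (\<lambda>X. GR X Y)"
  unfolding ml_def
proof (intro allI impI)
  fix xs :: "'m list" and i :: nat assume "length xs = 6" "i < 6"
  then obtain a b c d e f where "xs = [a,b,c,d,e,f]" using len6 by blast
  with lt6[OF \<open>i < 6\<close>] show "(\<forall>x y. GR (xs[i := x + y]) Y = GR (xs[i := x]) Y + GR (xs[i := y]) Y) \<and>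
       (\<forall>ca x. GR (xs[i := smM ca x]) Y = ca * GR (xs[i := x]) Y)"
    by (auto simp: GR_def ring_distribs)
qed

lemma ml_GR2: "ml 6 (\<lambda>Y. GR X Y)"
  unfolding ml_def
proof (intro allI impI)
  fix xs :: "'m list" and i :: nat assume "length xs = 6" "i < 6"
  then obtain a b c d e f where "xs = [a,b,c,d,e,f]" using len6 by blast
  with lt6[OF \<open>i < 6\<close>] show "(\<forall>x y. GR X (xs[i := x + y]) = GR X (xs[i := x]) + GR X (xs[i := y])) \<and>
       (\<forall>ca x. GR X (xs[i := smM ca x]) = ca * GR X (xs[i := x]))"
    by (auto simp: GR_def ring_distribs)
qed


abbreviation "s2 \<equiv> conv D (symmetrization D r) s1"

lemma s2_eq: "s2 u v = (\<Sum>(a1,a2)\<leftarrow>D u. \<Sum>(p,q)\<leftarrow>D a1. \<Sum>(b1,b2)\<leftarrow>D v. \<Sum>(p',q')\<leftarrow>D b1.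
    r p p' * r q' q * s1 a2 b2)"
proof -
  have "s2 u v = (\<Sum>(a1,a2)\<leftarrow>D u. \<Sum>(b1,b2)\<leftarrow>D v. \<Sum>(p,q)\<leftarrow>D a1. \<Sum>(p',q')\<leftarrow>D b1.
    r p p' * r q' q * s1 a2 b2)"
    by (simp add: conv_eq symmetrization_def transp_def sum2_mult_const)
  then show ?thesis by (simp only: sw2[where xs="D v"])
qed

definition R0 :: "'m list \<Rightarrow> 'm list \<Rightarrow> complex" where
  "R0 xs ys = (\<Sum>(u1,u2)\<leftarrow>D (xs!2). \<Sum>(v1,v2)\<leftarrow>D (ys!2).
      \<phi> (u1*v1) (s2 u2 v2 * (r (xs!0) (xs!1) * r (ys!0) (ys!1))))"

lemma RHS_unfold: "(\<Sum>(x,y)\<leftarrow>bulletA D s2 (EQ D r a) (EQ D r b). \<phi> x y) = SW 2 a (\<lambda>xs. SW 2 b (\<lambda>ys. R0 xs ys))"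
  by (simp add: bulletA_def bulletM_def EQ_def R0_def SW_Suc numeral_eq_Suc sum_list_concat' map_concat comp_def split_def)

lemma LHS_unfold: "(\<Sum>(x,y)\<leftarrow>EQA D r (bulletM D s1 a b). \<phi> x y) =
   (\<Sum>(a1,a2)\<leftarrow>D a. \<Sum>(b1,b2)\<leftarrow>D b. SW 2 (a1*b1) (F0 (s1 a2 b2)))"
  by (simp add: EQA_def bulletM_def EQ_def F0_def SW_Suc numeral_eq_Suc sum_list_concat' map_concat comp_def split_def)


lemma split_R: "ml 6 F \<Longrightarrow> SW 5 b F = SW 2 b (spl 2 (spl 3 (spl 3 F)))"
proof -
  assume m: "ml 6 F"
  have m6: "ml (Suc (Suc 4)) F" using m by simp
  have m5: "ml (Suc (Suc 3)) (spl 3 F)" using ml_split[OF m6, of 3] by simp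
  have m4: "ml (Suc (Suc 2)) (spl 3 (spl 3 F))" using ml_split[OF m5, of 3] by simp
  have "SW 5 b F = SW (Suc 4) b F" by simp
  also have "\<dots> = SW 4 b (spl 3 F)" by (rule SW_split[OF m6]) simp
  also have "\<dots> = SW (Suc 3) b (spl 3 F)" by simp
  also have "\<dots> = SW 3 b (spl 3 (spl 3 F))" by (rule SW_split[OF m5]) simp
  also have "\<dots> = SW (Suc 2) b (spl 3 (spl 3 F))" by simp
  also have "\<dots> = SW 2 b (spl 2 (spl 3 (spl 3 F)))" by (rule SW_split[OF m4]) simp
  finally show ?thesis .
qed

lemma split_L: "ml 6 F \<Longrightarrow> SW 5 b F = SW 3 b (spl 1 (spl 0 F))"
proof -
  assume m: "ml 6 F"
  have m6: "ml (Suc (Suc 4)) F" using m by simp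
  have m5: "ml (Suc (Suc 3)) (spl 0 F)" using ml_split[OF m6, of 0] by simp
  have "SW 5 b F = SW (Suc 4) b F" by simp
  also have "\<dots> = SW 4 b (spl 0 F)" by (rule SW_split[OF m6]) simp
  also have "\<dots> = SW (Suc 3) b (spl 0 F)" by simp
  also have "\<dots> = SW 3 b (spl 1 (spl 0 F))" by (rule SW_split[OF m5]) simp
  finally show ?thesis .
qed

lemma R_point: "(\<Sum>(u,w)\<leftarrow>D x2. \<Sum>(w1,w2)\<leftarrow>D w. \<Sum>(p,q)\<leftarrow>D w1. \<Sum>(u',wy)\<leftarrow>D y2. \<Sum>(wy1,wy2)\<leftarrow>D wy.
     \<Sum>(p',q')\<leftarrow>D wy1. GR [x0,x1,u,p,q,w2] [y0,y1,u',p',q',wy2]) = R0 [x0,x1,x2] [y0,y1,y2]"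
proof -
  have "R0 [x0,x1,x2] [y0,y1,y2] = (\<Sum>(u,w)\<leftarrow>D x2. \<Sum>(u',wy)\<leftarrow>D y2. \<Sum>(w1,w2)\<leftarrow>D w. \<Sum>(p,q)\<leftarrow>D w1.
      \<Sum>(wy1,wy2)\<leftarrow>D wy. \<Sum>(p',q')\<leftarrow>D wy1. GR [x0,x1,u,p,q,w2] [y0,y1,u',p',q',wy2])"
    by (simp add: R0_def s2_eq GR_def sum2_mult_const)
  also have "\<dots> = (\<Sum>(u,w)\<leftarrow>D x2. \<Sum>(w1,w2)\<leftarrow>D w. \<Sum>(p,q)\<leftarrow>D w1. \<Sum>(u',wy)\<leftarrow>D y2. \<Sum>(wy1,wy2)\<leftarrow>D wy.
     \<Sum>(p',q')\<leftarrow>D wy1. GR [x0,x1,u,p,q,w2] [y0,y1,u',p',q',wy2])"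
    by (simp only: sw2[where xs="D y2"])
  finally show ?thesis by simp
qed

lemma RHS_chain: "SW 2 a (\<lambda>xs. SW 2 b (\<lambda>ys. R0 xs ys)) = SW 5 a (\<lambda>X. SW 5 b (GR X))"
proof -
  have mGR: "ml 6 (GR X)" for X using ml_GR2[of X] by simp
  have b5: "SW 5 b (GR X) = SW 2 b (spl 2 (spl 3 (spl 3 (GR X))))" for X
    by (rule split_R[OF mGR])
  have "SW 5 a (\<lambda>X. SW 5 b (GR X)) = SW 2 a (spl 2 (spl 3 (spl 3 (\<lambda>X. SW 5 b (GR X)))))"
    by (rule split_R[OF ml_SW[OF ml_GR1]])
  also have "\<dots> = SW 2 a (\<lambda>xs. SW 2 b (\<lambda>ys. R0 xs ys))"
  proof (rule SW_cong)
    fix xs :: "'m list" assume "length xs = Suc 2"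
    then obtain x0 x1 x2 where xs: "xs = [x0,x1,x2]" using len3[of xs] by auto
    have "spl 2 (spl 3 (spl 3 (\<lambda>X. SW 5 b (GR X)))) [x0,x1,x2] =
      SW 2 b (\<lambda>ys. \<Sum>(u,w)\<leftarrow>D x2. \<Sum>(w1,w2)\<leftarrow>D w. \<Sum>(p,q)\<leftarrow>D w1.
          spl 2 (spl 3 (spl 3 (GR [x0,x1,u,p,q,w2]))) ys)"
      by (simp add: spl_def b5 SW_sum2)
    also have "\<dots> = SW 2 b (R0 [x0,x1,x2])"
    proof (rule SW_cong)
      fix ys :: "'m list" assume "length ys = Suc 2"
      then obtain y0 y1 y2 where ys: "ys = [y0,y1,y2]" using len3[of ys] by auto
      show "(\<Sum>(u,w)\<leftarrow>D x2. \<Sum>(w1,w2)\<leftarrow>D w. \<Sum>(p,q)\<leftarrow>D w1.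
          spl 2 (spl 3 (spl 3 (GR [x0,x1,u,p,q,w2]))) ys) = R0 [x0,x1,x2] ys"
        unfolding ys R_point[symmetric] by (simp add: spl_def)
    qed
    finally show "spl 2 (spl 3 (spl 3 (\<lambda>X. SW 5 b (GR X)))) xs = SW 2 b (R0 xs)"
      unfolding xs .
  qed
  finally show ?thesis by simp
qed


definition GL :: "'m list \<Rightarrow> 'm list \<Rightarrow> complex" where
  "GL X Y = GR (swps [1,3,2] X) (swps [0,2,1,3,2,3] Y)"

definition G1 :: "'m list \<Rightarrow> 'm list \<Rightarrow> complex" where
  "G1 X Y = \<phi> (X!2 * Y!2) (r (X!0 * Y!0) (X!1 * Y!1) * s1 (X!3) (Y!3))"

lemma gl: "GL X = (\<lambda>Y. GR (swps [1,3,2] X) (swps [0,2,1,3,2,3] Y))"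
  by (simp add: GL_def fun_eq_iff)

lemma swap_chain: "SW 5 a (\<lambda>X. SW 5 b (GL X)) = SW 5 a (\<lambda>X. SW 5 b (GR X))"
proof -
  have mGR: "ml (Suc (Suc 4)) (GR X)" for X using ml_GR2[of X] by simp
  have inner: "SW 5 b (GL X) = SW 5 b (GR (swps [1,3,2] X))" for X
    unfolding gl using SW_swps[OF mGR, of "[0,2,1,3,2,3]" b] by simp
  have mo: "ml (Suc (Suc 4)) (\<lambda>X. SW 5 b (GR X))" using ml_SW[OF ml_GR1] by simp
  show ?thesis unfolding inner using SW_swps[OF mo, of "[1,3,2]" a] by simp
qed

lemma L_point: "(\<Sum>(u,v)\<leftarrow>D x1. \<Sum>(p,q)\<leftarrow>D x0. \<Sum>(u',v')\<leftarrow>D y1. \<Sum>(p',q')\<leftarrow>D y0.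
     GL [p,q,u,v,x2,x3] [p',q',u',v',y2,y3]) = G1 [x0,x1,x2,x3] [y0,y1,y2,y3]"
proof -
  let ?\<psi> = "\<lambda>c1 c2. \<phi> (x2*y2) (r x0 c1 * r y0 c2 * s1 x3 y3)"
  have b: "bil ?\<psi>" unfolding bil_def by (simp add: ring_distribs)
  have "G1 [x0,x1,x2,x3] [y0,y1,y2,y3] = (\<Sum>(c1,c2)\<leftarrow>D (x1*y1). ?\<psi> c1 c2)"
    by (simp add: G1_def r_mult1 sum2_mult_const)
  also have "\<dots> = (\<Sum>(u,v)\<leftarrow>D x1. \<Sum>(u',v')\<leftarrow>D y1. ?\<psi> (u*u') (v*v'))"
    by (rule D_mult[OF b])
  also have "\<dots> = (\<Sum>(u,v)\<leftarrow>D x1. \<Sum>(u',v')\<leftarrow>D y1. \<Sum>(p',q')\<leftarrow>D y0. \<Sum>(p,q)\<leftarrow>D x0.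
      \<phi> (x2*y2) (r p u * r q u' * (r p' v * r q' v') * s1 x3 y3))"
    by (simp add: r_mult2 sum2_mult_const sum2_const_mult)
  also have "\<dots> = (\<Sum>(u,v)\<leftarrow>D x1. \<Sum>(u',v')\<leftarrow>D y1. \<Sum>(p,q)\<leftarrow>D x0. \<Sum>(p',q')\<leftarrow>D y0.
      \<phi> (x2*y2) (r p u * r q u' * (r p' v * r q' v') * s1 x3 y3))"
    by (simp only: sw2[where xs="D y0" and ys="D x0"])
  also have "\<dots> = (\<Sum>(u,v)\<leftarrow>D x1. \<Sum>(p,q)\<leftarrow>D x0. \<Sum>(u',v')\<leftarrow>D y1. \<Sum>(p',q')\<leftarrow>D y0.
      \<phi> (x2*y2) (r p u * r q u' * (r p' v * r q' v') * s1 x3 y3))"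
    by (simp only: sw2[where xs="D y1" and ys="D x0"])
  also have "\<dots> = (\<Sum>(u,v)\<leftarrow>D x1. \<Sum>(p,q)\<leftarrow>D x0. \<Sum>(u',v')\<leftarrow>D y1. \<Sum>(p',q')\<leftarrow>D y0.
     GL [p,q,u,v,x2,x3] [p',q',u',v',y2,y3])"
    by (simp add: GL_def GR_def swp_def mult_ac)
  finally show ?thesis by simp
qed

lemma LHS_chain: "(\<Sum>(a1,a2)\<leftarrow>D a. \<Sum>(b1,b2)\<leftarrow>D b. SW 2 (a1*b1) (F0 (s1 a2 b2))) = SW 5 a (\<lambda>X. SW 5 b (GL X))"
proof -
  have mF: "ml (Suc 2) (F0 c)" for c using ml_F0 by simp
  have "(\<Sum>(a1,a2)\<leftarrow>D a. \<Sum>(b1,b2)\<leftarrow>D b. SW 2 (a1*b1) (F0 (s1 a2 b2))) =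
    (\<Sum>(a1,a2)\<leftarrow>D a. \<Sum>(b1,b2)\<leftarrow>D b. SW 2 a1 (\<lambda>xs. SW 2 b1 (\<lambda>ys. F0 (s1 a2 b2) (map2 (*) xs ys))))"
    by (simp only: SW_mult[OF mF])
  also have "\<dots> = SW 3 a (\<lambda>X. SW 3 b (G1 X))"
  proof -
    have S3: "SW 3 x F = (\<Sum>(x1,x2)\<leftarrow>D x. SW 2 x1 (\<lambda>xs. F (xs @ [x2])))" for x F
      using SW_Suc[of 2 x F] by (simp add: numeral_3_eq_3)
    have e: "SW 2 a1 (\<lambda>xs. SW 3 b (G1 (xs @ [a2]))) =
        (\<Sum>(b1,b2)\<leftarrow>D b. SW 2 a1 (\<lambda>xs. SW 2 b1 (\<lambda>ys. F0 (s1 a2 b2) (map2 (*) xs ys))))" for a1 a2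
    proof -
      have "SW 2 a1 (\<lambda>xs. SW 3 b (G1 (xs @ [a2]))) =
          SW 2 a1 (\<lambda>xs. \<Sum>(b1,b2)\<leftarrow>D b. SW 2 b1 (\<lambda>ys. F0 (s1 a2 b2) (map2 (*) xs ys)))"
      proof (rule SW_cong)
        fix xs :: "'m list" assume "length xs = Suc 2"
        then obtain x0 x1 x2 where xs: "xs = [x0,x1,x2]" using len3[of xs] by auto
        have "SW 2 b1 (\<lambda>ys. G1 (xs @ [a2]) (ys @ [b2])) = SW 2 b1 (\<lambda>ys. F0 (s1 a2 b2) (map2 (*) xs ys))" for b1 b2
        proof (rule SW_cong)
          fix ys :: "'m list" assume "length ys = Suc 2"
          then obtain y0 y1 y2 where ys: "ys = [y0,y1,y2]" using len3[of ys] by auto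
          show "G1 (xs @ [a2]) (ys @ [b2]) = F0 (s1 a2 b2) (map2 (*) xs ys)"
            unfolding xs ys by (simp add: G1_def F0_def)
        qed
        then show "SW 3 b (G1 (xs @ [a2])) = (\<Sum>(b1,b2)\<leftarrow>D b. SW 2 b1 (\<lambda>ys. F0 (s1 a2 b2) (map2 (*) xs ys)))"
          by (simp add: S3)
      qed
      then show ?thesis by (simp only: SW_sum2)
    qed
    show ?thesis by (simp only: S3[of a] e)
  qed
  also have "\<dots> = SW 5 a (\<lambda>X. SW 5 b (GL X))"
  proof -
    have mGL2: "ml 6 (GL X)" for X
      unfolding gl using ml_swps[OF ml_GR2[of "swps [1,3,2] X"], of "[0,2,1,3,2,3]"] by simp
    have mGL1: "ml 6 (\<lambda>X. GL X Y)" for Y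
      using ml_swps[OF ml_GR1[of "swps [0,2,1,3,2,3] Y"], of "[1,3,2]"] by (simp add: GL_def)
    have b5: "SW 5 b (GL X) = SW 3 b (spl 1 (spl 0 (GL X)))" for X
      by (rule split_L[OF mGL2])
    have "SW 5 a (\<lambda>X. SW 5 b (GL X)) = SW 3 a (spl 1 (spl 0 (\<lambda>X. SW 5 b (GL X))))"
      by (rule split_L[OF ml_SW[OF mGL1]])
    also have "\<dots> = SW 3 a (\<lambda>X. SW 3 b (G1 X))"
    proof (rule SW_cong)
      fix xs :: "'m list" assume "length xs = Suc 3"
      then obtain x0 x1 x2 x3 where xs: "xs = [x0,x1,x2,x3]" using len4[of xs] by auto
      have "spl 1 (spl 0 (\<lambda>X. SW 5 b (GL X))) [x0,x1,x2,x3] =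
        SW 3 b (\<lambda>ys. \<Sum>(u,v)\<leftarrow>D x1. \<Sum>(p,q)\<leftarrow>D x0. spl 1 (spl 0 (GL [p,q,u,v,x2,x3])) ys)"
        by (simp add: spl_def b5 SW_sum2)
      also have "\<dots> = SW 3 b (G1 [x0,x1,x2,x3])"
      proof (rule SW_cong)
        fix ys :: "'m list" assume "length ys = Suc 3"
        then obtain y0 y1 y2 y3 where ys: "ys = [y0,y1,y2,y3]" using len4[of ys] by auto
        show "(\<Sum>(u,v)\<leftarrow>D x1. \<Sum>(p,q)\<leftarrow>D x0. spl 1 (spl 0 (GL [p,q,u,v,x2,x3])) ys) = G1 [x0,x1,x2,x3] ys"
          unfolding ys L_point[symmetric] by (simp add: spl_def)
      qed
      finally show "spl 1 (spl 0 (\<lambda>X. SW 5 b (GL X))) xs = SW 3 b (G1 xs)" unfolding xs .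
    qed
    finally show ?thesis by simp
  qed
  finally show ?thesis .
qed

lemma main_phi: "(\<Sum>(x,y)\<leftarrow>EQA D r (bulletM D s1 a b). \<phi> x y) =
   (\<Sum>(x,y)\<leftarrow>bulletA D s2 (EQ D r a) (EQ D r b). \<phi> x y)"
  unfolding LHS_unfold RHS_unfold LHS_chain RHS_chain swap_chain ..

end

theorem theorem2p9:
  fixes smM :: "complex \<Rightarrow> 'm::comm_ring_1 \<Rightarrow> 'm"
    and smA :: "complex \<Rightarrow> 'a::comm_ring_1 \<Rightarrow> 'a"
    and \<Delta> :: "'m \<Rightarrow> ('m \<times> 'm) list" and \<eta> :: "'m \<Rightarrow> complex" and S :: "'m \<Rightarrow> 'm"
    and r s1 :: "'m \<Rightarrow> 'm \<Rightarrow> 'a"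
  assumes "cc_hopf smM \<Delta> \<eta> S"
    and "calg smA"
    and "bichar smM smA \<Delta> \<eta> r"
    and "bichar smM smA \<Delta> \<eta> s1" and "symmetric_bichar s1"
  shows "\<forall>a b. teq2 smM smA
           (EQA \<Delta> r (bulletM \<Delta> s1 a b))
           (bulletA \<Delta> (conv \<Delta> (symmetrization \<Delta> r) s1) (EQ \<Delta> r a) (EQ \<Delta> r b))"
  unfolding teq2_def
proof (intro allI impI)
  fix a b and \<phi> :: "'m \<Rightarrow> 'a \<Rightarrow> complex"
  assume phi: "cbil smM smA (*) \<phi>"
  interpret setup2 smM \<Delta> \<eta> S smA r s1 \<phi>
    by unfold_locales (use assms phi in auto)
  show "(\<Sum>(x, y)\<leftarrow>EQA \<Delta> r (bulletM \<Delta> s1 a b). \<phi> x y) =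
    (\<Sum>(x, y)\<leftarrow>bulletA \<Delta> (conv \<Delta> (symmetrization \<Delta> r) s1) (EQ \<Delta> r a) (EQ \<Delta> r b). \<phi> x y)"
    by (rule main_phi)
qed

end
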